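(* Let $\mathcal G=(\mathcal V,\mathcal E,W)$ be a network, $h\in\mathbb{R}^{\mathcal V}$, and consider the SNC game with binary actions on $\mathcal G$ with external field $h$, with set of Nash equilibria $\mathcal N$. Let $\mathcal V=\mathcal R\cup\mathcal S$, $\mathcal R\cap\mathcal S=\emptyset$, be a binary partition such that $\mathcal G_{\mathcal R}$ is unsigned. Assume there exists $a\in\{\pm1\}$ such that $$w_i^{\mathcal R}+ah_i\ge w_i^{\mathcal S}\qquad\forall i\in\mathcal R,$$ and $\mathcal N_{\mathcal S}^{(a\mathbf 1)}\neq\emptyset$. Then there exists a Nash equilibrium $x^*\in\mathcal N$ with $x^*_{\mathcal R}=a\mathbf 1$.
   Context: A network is a triple $\mathcal G=(\mathcal V,\mathcal E,W)$ where $\mathcal V$ is a finite nonempty set, $\mathcal E\subseteq\mathcal V\times\mathcal V$, and $W\in\mathbb{R}^{\mathcal V\times\mathcal V}$ has zero diagonal and satisfies $W_{ij}\neq0$ iff $(i,j)\in\mathcal E$ (weights may have either sign). It is unsigned if $W\ge0$ entrywise. For $\mathcal U\subseteq\mathcal V$, the subnetwork $\mathcal G_{\mathcal U}$ has node set $\mathcal U$, links $\mathcal E\cap(\mathcal U\times\mathcal U)$ and weight matrix $W_{\mathcal U\mathcal U}$. For $i\in\mathcal V$ and $\mathcal B\subseteq\mathcal V$, $w_i^{\mathcal B}=\sum_{j\in\mathcal B}|W_{ij}|$. $\mathbf 1$ is the all-ones vector. The SNC game with binary actions on $\mathcal G$ with external field $h\in\mathbb{R}^{\mathcal V}$ has player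 set $\mathcal V$, action set $\{-1,+1\}$ for each player, strategy profiles $\mathcal X=\{\pm1\}^{\mathcal V}$, and utilities $u_i(x)=h_ix_i+x_i\sum_{j\in\mathcal V}W_{ij}x_j$. Best responses $\mathcal B_i(x_{-i})=\arg\max_{x_i\in\{\pm1\}}u_i(x_i,x_{-i})$; Nash equilibrium: $x^*_i\in\mathcal B_i(x^*_{-i})$ for all $i$. Profiles are written $x=(x_{\mathcal R},x_{\mathcal S})$. For $y\in\{\pm1\}^{\mathcal R}$, the $\mathcal S$-restricted game with strategy profile of players in $\mathcal R$ frozen to $y$ has player set $\mathcal S$, actions $\{\pm1\}$, and utilities $u_i^{(y)}(z)=u_i(y,z)$ for $i\in\mathcal S$, $z\in\{\pm1\}^{\mathcal S}$; $\mathcal N_{\mathcal S}^{(y)}$ is its set of Nash equilibria. *)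

theory Defs
  imports "HOL-Analysis.Analysis"
begin

definition network :: "'v set \<Rightarrow> ('v \<times> 'v) set \<Rightarrow> ('v \<Rightarrow> 'v \<Rightarrow> real) \<Rightarrow> bool" where
  "network V E W \<longleftrightarrow> finite V \<and> V \<noteq> {} \<and> E \<subseteq> V \<times> V \<and>
     (\<forall>i\<in>V. W i i = 0) \<and> (\<forall>i\<in>V. \<forall>j\<in>V. W i j \<noteq> 0 \<longleftrightarrow> (i, j) \<in> E)"

definition unsigned_on :: "'v set \<Rightarrow> ('v \<Rightarrow> 'v \<Rightarrow> real) \<Rightarrow> bool" where
  "unsigned_on U W \<longleftrightarrow> (\<forall>i\<in>U. \<forall>j\<in>U. W i j \<ge> 0)"

definition wdeg :: "('v \<Rightarrow> 'v \<Rightarrow> real) \<Rightarrow> 'v \<Rightarrow> 'v set \<Rightarrow> real" where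
  "wdeg W i B = (\<Sum>j\<in>B. \<bar>W i j\<bar>)"

definition profiles :: "'v set \<Rightarrow> ('v \<Rightarrow> real) set" where
  "profiles P = {x. (\<forall>i\<in>P. x i \<in> {-1, 1}) \<and> (\<forall>i. i \<notin> P \<longrightarrow> x i = 0)}"

definition utility :: "'v set \<Rightarrow> ('v \<Rightarrow> 'v \<Rightarrow> real) \<Rightarrow> ('v \<Rightarrow> real) \<Rightarrow> 'v \<Rightarrow> ('v \<Rightarrow> real) \<Rightarrow> real" where
  "utility V W h i x = h i * x i + x i * (\<Sum>j\<in>V. W i j * x j)"

definition nash :: "'v set \<Rightarrow> ('v \<Rightarrow> 'v \<Rightarrow> real) \<Rightarrow> ('v \<Rightarrow> real) \<Rightarrow> ('v \<Rightarrow> real) set" where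
  "nash V W h = {x \<in> profiles V. \<forall>i\<in>V. \<forall>s\<in>{-1, 1}.
      utility V W h i x \<ge> utility V W h i (x(i := s))}"

(* Nash equilibria of the S-restricted game with players in R frozen to y
   (y \<in> profiles R, z \<in> profiles S, the joint profile is y + z) *)
definition restricted_nash :: "'v set \<Rightarrow> ('v \<Rightarrow> 'v \<Rightarrow> real) \<Rightarrow> ('v \<Rightarrow> real) \<Rightarrow> 'v set \<Rightarrow>
    ('v \<Rightarrow> real) \<Rightarrow> ('v \<Rightarrow> real) set" where
  "restricted_nash V W h S y = {z \<in> profiles S. \<forall>i\<in>S. \<forall>s\<in>{-1, 1}.
      utility V W h i (\<lambda>j. y j + z j) \<ge> utility V W h i ((\<lambda>j. y j + z j)(i := s))}"

end

theory Submission
  imports Defs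
begin

theorem proposition4:
  fixes V R S :: "'v set" and E :: "('v \<times> 'v) set" and W :: "'v \<Rightarrow> 'v \<Rightarrow> real"
    and h :: "'v \<Rightarrow> real" and a :: real
  assumes "network V E W"
    and "V = R \<union> S" and "R \<inter> S = {}"
    and "unsigned_on R W"
    and "a \<in> {-1, 1}"
    and "\<forall>i\<in>R. wdeg W i R + a * h i \<ge> wdeg W i S"
    and "restricted_nash V W h S (\<lambda>j. if j \<in> R then a else 0) \<noteq> {}"
  shows "\<exists>x\<in>nash V W h. \<forall>i\<in>R. x i = a"
proof -
  define y where "y = (\<lambda>j. if j \<in> R then a else 0)"
  obtain z where z: "z \<in> restricted_nash V W h S y" using assms(7) y_def by auto
  define x where "x = (\<lambda>j. y j + z j)"
  have fin: "finite V" and diag: "\<forall>i\<in>V. W i i = 0" using assms(1) by (auto simp: network_def)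
  have finR: "finite R" and finS: "finite S" using fin assms(2) by auto
  have zp: "z \<in> profiles S" and zn: "\<forall>i\<in>S. \<forall>s\<in>{-1, 1}. utility V W h i x \<ge> utility V W h i (x(i := s))"
    using z unfolding restricted_nash_def x_def by auto
  have zS: "\<forall>i\<in>S. z i \<in> {-1,1}" and z0: "\<forall>i. i \<notin> S \<longrightarrow> z i = 0" using zp by (auto simp: profiles_def)
  have xR: "\<forall>i\<in>R. x i = a" using z0 assms(3) by (auto simp: x_def y_def)
  have xS: "\<forall>i\<in>S. x i = z i" using assms(3) by (auto simp: x_def y_def)
  have xp: "x \<in> profiles V"
    unfolding profiles_def using xR xS zS z0 assms(2,5) by (auto simp: x_def y_def)
  have a2: "a * a = 1" using assms(5) by auto
  have "\<forall>i\<in>V. \<forall>s\<in>{-1, 1}. utility V W h i x \<ge> utility V W h i (x(i := s))"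
  proof (intro ballI)
    fix i s assume iV: "i \<in> V" and s: "(s::real) \<in> {-1,1}"
    show "utility V W h i x \<ge> utility V W h i (x(i := s))"
    proof (cases "i \<in> S")
      case True then show ?thesis using zn s by blast
    next
      case False
      hence iR: "i \<in> R" using iV assms(2) by auto
      have sumeq: "(\<Sum>j\<in>V. W i j * (x(i:=s)) j) = (\<Sum>j\<in>V. W i j * x j)"
        by (rule sum.cong) (auto simp: diag iV)
      have split: "(\<Sum>j\<in>V. W i j * x j) = (\<Sum>j\<in>R. W i j * x j) + (\<Sum>j\<in>S. W i j * x j)"
        using assms(2,3) finR finS by (simp add: sum.union_disjoint)
      have r: "a * (\<Sum>j\<in>R. W i j * x j) = wdeg W i R"
        unfolding wdeg_def sum_distrib_left
      proof (rule sum.cong)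
        fix j assume "j \<in> R"
        then show "a * (W i j * x j) = \<bar>W i j\<bar>" using xR assms(4) iR a2
          by (auto simp: unsigned_on_def algebra_simps)
      qed simp
      have sS: "a * (\<Sum>j\<in>S. W i j * x j) \<ge> - wdeg W i S"
        unfolding wdeg_def sum_distrib_left sum_negf[symmetric]
      proof (rule sum_mono)
        fix j assume "j \<in> S"
        hence "x j \<in> {-1,1}" using xS zS by auto
        then show "- \<bar>W i j\<bar> \<le> a * (W i j * x j)" using assms(5) by auto
      qed
      have key: "a * (h i + (\<Sum>j\<in>V. W i j * x j)) \<ge> 0"
      proof -
        have "wdeg W i R + a * h i \<ge> wdeg W i S" using assms(6) iR by blast
        then show ?thesis using r sS split by (simp add: distrib_left)
      qed
      show ?thesis
      proof (cases "s = a")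
        case True then show ?thesis using xR iR by (simp add: fun_upd_idem)
      next
        case False
        hence sa: "s = - a" using s assms(5) by auto
        show ?thesis unfolding utility_def sumeq using key xR iR sa
          by (simp add: algebra_simps)
      qed
    qed
  qed
  then have "x \<in> nash V W h" using xp by (simp add: nash_def)
  then show ?thesis using xR by blast
qed

end
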